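(* Let $f : M^* \to \mathbb{R}^3$ be a trivalent polyhedral surface with nonvanishing edge lengths, with the three face normals at every vertex linearly independent and adjacent faces satisfying $n_l \neq \pm n_r$. Then $f$ is a discrete minimal surface (i.e. $H_\phi = 0$ for every face $\phi \in F^*$) if and only if $f$ is a critical point of the area functional with respect to all face offsets of finite support, in the following sense: for every smooth family of height functions $h^t$ with $h^0 = h$ such that $\dot h = \frac{d}{dt}h^t|_{t=0}$ has finite support, with face normals $n$ kept fixed and $f^t$ the corresponding polyhedral surfaces, one has \[ \sum_{\phi \in F^*} \frac{d}{dt}\mathrm{Area}(f^t(\phi))\Big|_{t=0} = 0 \] (a sum with only finitely many nonzero terms).
   Context: Let $M=(V,E,F)$ be a cellular decomposition of an oriented surface without boundary (each face having finitely many edges, each vertex of finite degree), and $M^*=(V^*,E^*,F^* )$ its dual decomposition; faces of $M^*$ correspond bijectively to vertices of $M$. A polyhedral surface is a map $f : V^* \to \mathbb{R}^3$ such that the vertices of each face $\phi \in F^*$ are coplanar (faces may self-intersect). It is trivalent if every vertex of $M^*$ has degree 3. For each face $\phi$, $n_\phi \in \mathbb{S}^2$ is its unit normal (compatible with the orientation) and $h_\phi = \langle f_i, n_\phi\rangle$ for any vertex $i$ of $\phi$ is its height; the vertices of a trivalent surface are determined by $(n,h)$, vertex $i$ being the unique point with $\langle f_i,n_\phi\rangle = h_\phi$ for the three faces $\phi$ containing it. For an oriented edge from $i$ to $j$, the left face $l$ is the face whose positively oriented boundary traverses $i \to j$, and the right face $r$ is the other face containing the edge. The edge length is $\ell_{ij}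 = \|f_j - f_i\|$ and the dihedral angle $\alpha_{ij} \in (-\pi,\pi)$ is defined by $\cos\alpha_{ij} = \langle n_l, n_r\rangle$ and $\sin\alpha_{ij} = \langle n_l \times n_r, (f_j - f_i)/\|f_j-f_i\|\rangle$. The integrated mean curvature of a face is $H_\phi = \frac12\sum_{ij\in\partial\phi}\ell_{ij}\tan\frac{\alpha_{ij}}{2}$. The signed area of a face $\phi$ with boundary vertices $i_1,\dots,i_m$ in positive cyclic order is $\mathrm{Area}(f(\phi)) = \frac12\sum_{s=1}^m \langle f_{i_s}\times f_{i_{s+1}}, n_\phi\rangle$ (indices mod $m$). *)

theory Defs
  imports "HOL-Analysis.Analysis"
begin

text \<open>Combinatorial model of the dual decomposition M* of an oriented surface as a
combinatorial map on a set D of darts (oriented edges):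
  e d   = the reversed dart,
  nx d  = the next dart along the positively oriented boundary of the left face of d,
  tv d  = the tail (initial) vertex of d,
  fc d  = the left face of d (the face whose positively oriented boundary traverses d).
The right face of d is fc (e d); the head of d is tv (e d).
The vertex rotation (outgoing darts around a vertex) is nx o e.\<close>

definition comb_map ::
  "'d set \<Rightarrow> ('d \<Rightarrow> 'd) \<Rightarrow> ('d \<Rightarrow> 'd) \<Rightarrow> ('d \<Rightarrow> 'v) \<Rightarrow> ('d \<Rightarrow> 'f) \<Rightarrow> bool" where
  "comb_map D e nx tv fc \<longleftrightarrow>
     countable D \<and>
     (\<forall>d\<in>D. e d \<in> D \<and> e (e d) = d \<and> e d \<noteq> d) \<and>
     bij_betw nx D D \<and>
     (\<forall>d\<in>D. tv (nx d) = tv (e d)) \<and>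
     (\<forall>d\<in>D. \<exists>k>0. (nx ^^ k) d = d) \<and>
     (\<forall>d\<in>D. \<exists>k>0. ((nx \<circ> e) ^^ k) d = d) \<and>
     (\<forall>d\<in>D. \<forall>d'\<in>D. fc d = fc d' \<longleftrightarrow> (\<exists>k. (nx ^^ k) d = d')) \<and>
     (\<forall>d\<in>D. \<forall>d'\<in>D. tv d = tv d' \<longleftrightarrow> (\<exists>k. ((nx \<circ> e) ^^ k) d = d'))"

definition trivalent :: "'d set \<Rightarrow> ('d \<Rightarrow> 'd) \<Rightarrow> ('d \<Rightarrow> 'd) \<Rightarrow> bool" where
  "trivalent D e nx \<longleftrightarrow>
     (\<forall>d\<in>D. ((nx \<circ> e) ^^ 3) d = d \<and> (nx \<circ> e) d \<noteq> d)"

definition lin_indep3 :: "real^3 \<Rightarrow> real^3 \<Rightarrow> real^3 \<Rightarrow> bool" where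
  "lin_indep3 u v w \<longleftrightarrow>
     (\<forall>a b c. a *\<^sub>R u + b *\<^sub>R v + c *\<^sub>R w = 0 \<longrightarrow> a = 0 \<and> b = 0 \<and> c = 0)"

definition edge_len :: "('d \<Rightarrow> 'd) \<Rightarrow> ('d \<Rightarrow> 'v) \<Rightarrow> ('v \<Rightarrow> real^3) \<Rightarrow> 'd \<Rightarrow> real" where
  "edge_len e tv p d = norm (p (tv (e d)) - p (tv d))"

definition dihedral ::
  "('d \<Rightarrow> 'd) \<Rightarrow> ('d \<Rightarrow> 'v) \<Rightarrow> ('d \<Rightarrow> 'f) \<Rightarrow> ('f \<Rightarrow> real^3) \<Rightarrow> ('v \<Rightarrow> real^3) \<Rightarrow> 'd \<Rightarrow> real" where
  "dihedral e tv fc n p d =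
     (THE a. - pi < a \<and> a < pi \<and>
        cos a = n (fc d) \<bullet> n (fc (e d)) \<and>
        sin a = cross3 (n (fc d)) (n (fc (e d))) \<bullet>
                  ((p (tv (e d)) - p (tv d)) /\<^sub>R norm (p (tv (e d)) - p (tv d))))"

definition mean_curv ::
  "'d set \<Rightarrow> ('d \<Rightarrow> 'd) \<Rightarrow> ('d \<Rightarrow> 'v) \<Rightarrow> ('d \<Rightarrow> 'f) \<Rightarrow> ('f \<Rightarrow> real^3) \<Rightarrow> ('v \<Rightarrow> real^3) \<Rightarrow> 'f \<Rightarrow> real" where
  "mean_curv D e tv fc n p \<phi> =
     1/2 * (\<Sum>d\<in>{d\<in>D. fc d = \<phi>}. edge_len e tv p d * tan (dihedral e tv fc n p d / 2))"

definition face_area ::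
  "'d set \<Rightarrow> ('d \<Rightarrow> 'd) \<Rightarrow> ('d \<Rightarrow> 'v) \<Rightarrow> ('d \<Rightarrow> 'f) \<Rightarrow> ('f \<Rightarrow> real^3) \<Rightarrow> ('v \<Rightarrow> real^3) \<Rightarrow> 'f \<Rightarrow> real" where
  "face_area D e tv fc n p \<phi> =
     1/2 * (\<Sum>d\<in>{d\<in>D. fc d = \<phi>}. cross3 (p (tv d)) (p (tv (e d))) \<bullet> n \<phi>)"

definition vert_of ::
  "'d set \<Rightarrow> ('d \<Rightarrow> 'v) \<Rightarrow> ('d \<Rightarrow> 'f) \<Rightarrow> ('f \<Rightarrow> real^3) \<Rightarrow> ('f \<Rightarrow> real) \<Rightarrow> 'v \<Rightarrow> real^3" where
  "vert_of D tv fc n h i = (THE x. \<forall>d\<in>D. tv d = i \<longrightarrow> x \<bullet> n (fc d) = h (fc d))"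

definition smooth_fun :: "(real \<Rightarrow> real) \<Rightarrow> bool" where
  "smooth_fun g \<longleftrightarrow>
     (\<exists>Dg :: nat \<Rightarrow> real \<Rightarrow> real. Dg 0 = g \<and>
        (\<forall>k t. (Dg k has_real_derivative Dg (Suc k) t) (at t)))"

end

theory Submission imports Defs begin


lemma funpow_mod_eq:
  assumes "(f ^^ p) x = x"
  shows "(f ^^ k) x = (f ^^ (k mod p)) x"
proof -
  have q: "(f ^^ (q*p)) x = x" for q
    by (induction q) (simp_all add: funpow_add assms)
  have "k = k mod p + k div p * p" by simp
  then have "(f ^^ k) x = (f ^^ (k mod p)) ((f ^^ (k div p * p)) x)"
    by (metis comp_apply funpow_add)
  then show ?thesis using q by simp
qed

lemma vI1: fixes N1 N2 N3 x :: "real^3"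
  shows "(N1 \<bullet> cross3 N2 N3) *\<^sub>R x = (x \<bullet> N1) *\<^sub>R cross3 N2 N3 + (x \<bullet> N2) *\<^sub>R cross3 N3 N1 + (x \<bullet> N3) *\<^sub>R cross3 N1 N2"
  by (simp add: cross3_simps forall_3)
lemma vI2: fixes N1 N2 N3 y :: "real^3"
  shows "(N1 \<bullet> cross3 N2 N3) *\<^sub>R y = (y \<bullet> cross3 N2 N3) *\<^sub>R N1 + (y \<bullet> cross3 N3 N1) *\<^sub>R N2 + (y \<bullet> cross3 N1 N2) *\<^sub>R N3"
  by (simp add: cross3_simps forall_3)
lemma vI3: fixes x p q :: "real^3"
  shows "cross3 x (cross3 p q) = (x \<bullet> q) *\<^sub>R p - (x \<bullet> p) *\<^sub>R q"
  by (simp add: cross3_simps forall_3)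
lemma vtrip: fixes N1 N2 N3 :: "real^3"
  shows "cross3 N2 N3 \<bullet> N1 = N1 \<bullet> cross3 N2 N3" "cross3 N3 N1 \<bullet> N2 = N1 \<bullet> cross3 N2 N3"
    "cross3 N1 N2 \<bullet> N3 = N1 \<bullet> cross3 N2 N3"
    "N2 \<bullet> cross3 N3 N1 = N1 \<bullet> cross3 N2 N3" "N3 \<bullet> cross3 N1 N2 = N1 \<bullet> cross3 N2 N3"
  by (simp_all add: cross3_simps)

lemma det_nz:
  fixes N1 N2 N3 :: "real^3"
  assumes li: "lin_indep3 N1 N2 N3" and u: "norm N2 = 1"
  shows "N1 \<bullet> cross3 N2 N3 \<noteq> 0"
proof
  assume z: "N1 \<bullet> cross3 N2 N3 = 0"
  from vI2[of N1 N2 N3 "cross3 N2 N3"] z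
  have "(cross3 N2 N3 \<bullet> cross3 N2 N3) *\<^sub>R N1 + (cross3 N2 N3 \<bullet> cross3 N3 N1) *\<^sub>R N2
      + (cross3 N2 N3 \<bullet> cross3 N1 N2) *\<^sub>R N3 = 0" by simp
  with li have "cross3 N2 N3 \<bullet> cross3 N2 N3 = 0" unfolding lin_indep3_def by blast
  hence w: "cross3 N2 N3 = 0" by simp
  have "cross3 N2 (cross3 N3 N2) = (N2 \<bullet> N2) *\<^sub>R N3 - (N2 \<bullet> N3) *\<^sub>R N2" by (rule vI3)
  moreover have "cross3 N3 N2 = 0" using w by (metis cross_skew neg_equal_0_iff_equal)
  ultimately have "0 *\<^sub>R N1 + (- (N2 \<bullet> N3)) *\<^sub>R N2 + (N2 \<bullet> N2) *\<^sub>R N3 = 0" by simp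
  with li have "N2 \<bullet> N2 = 0" unfolding lin_indep3_def by blast
  moreover have "N2 \<bullet> N2 = 1" using u by (simp add: power2_norm_eq_inner[symmetric])
  ultimately show False by simp
qed

definition cr :: "real^3 \<Rightarrow> real^3 \<Rightarrow> real^3 \<Rightarrow> real \<Rightarrow> real \<Rightarrow> real \<Rightarrow> real^3" where
  "cr N1 N2 N3 a b c = (a / (N1 \<bullet> cross3 N2 N3)) *\<^sub>R cross3 N2 N3
     + (b / (N1 \<bullet> cross3 N2 N3)) *\<^sub>R cross3 N3 N1 + (c / (N1 \<bullet> cross3 N2 N3)) *\<^sub>R cross3 N1 N2"

lemma cr_sol:
  fixes N1 N2 N3 :: "real^3"
  assumes "N1 \<bullet> cross3 N2 N3 \<noteq> 0"
  shows "cr N1 N2 N3 a b c \<bullet> N1 = a" "cr N1 N2 N3 a b c \<bullet> N2 = b" "cr N1 N2 N3 a b c \<bullet> N3 = c"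
  using assms by (simp_all add: cr_def inner_add_left vtrip dot_cross_self)

lemma cr_unique:
  fixes N1 N2 N3 x :: "real^3"
  assumes d: "N1 \<bullet> cross3 N2 N3 \<noteq> 0" and "x \<bullet> N1 = a" "x \<bullet> N2 = b" "x \<bullet> N3 = c"
  shows "x = cr N1 N2 N3 a b c"
proof -
  have "(N1 \<bullet> cross3 N2 N3) *\<^sub>R x = (N1 \<bullet> cross3 N2 N3) *\<^sub>R cr N1 N2 N3 a b c"
    using vI1[of N1 N2 N3 x] assms by (simp add: cr_def scaleR_add_right)
  then show ?thesis using d by simp
qed

lemma scal_deriv:
  assumes "(g has_real_derivative g') (at 0)"
  shows "((\<lambda>t. (g t / k) *\<^sub>R v) has_vector_derivative (g' / k) *\<^sub>R v) (at 0)"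
proof -
  have "((\<lambda>t. g t / k) has_vector_derivative g' / k) (at 0)"
    using DERIV_cdivide[OF assms] by (simp add: has_real_derivative_iff_has_vector_derivative)
  then show ?thesis
    by (rule bounded_linear.has_vector_derivative[OF bounded_linear_scaleR_left])
qed

lemma cr_deriv:
  assumes "(g1 has_real_derivative g1') (at 0)" "(g2 has_real_derivative g2') (at 0)"
    "(g3 has_real_derivative g3') (at 0)"
  shows "((\<lambda>t. cr N1 N2 N3 (g1 t) (g2 t) (g3 t)) has_vector_derivative cr N1 N2 N3 g1' g2' g3') (at 0)"
  unfolding cr_def
  by (intro has_vector_derivative_add scal_deriv assms)

lemma bb_cross: "bounded_bilinear cross3"
  using bilinear_conv_bounded_bilinear bilinear_cross by blast

lemma angle_exists:
  fixes c s :: real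
  assumes "c\<^sup>2 + s\<^sup>2 = 1" "s \<noteq> 0"
  shows "\<exists>!a. - pi < a \<and> a < pi \<and> cos a = c \<and> sin a = s"
proof -
  have ex: "\<exists>a. - pi < a \<and> a < pi \<and> cos a = c \<and> sin a = s"
  proof (cases "s > 0")
    case True
    then obtain t where t: "0 \<le> t" "t \<le> pi" "c = cos t" "s = sin t"
      using sincos_total_pi[of s c] assms by auto
    have "t \<noteq> pi" using t assms by auto
    then show ?thesis using t by (intro exI[of _ t]) auto
  next
    case False
    then have "0 \<le> - s" by simp
    then obtain t where t: "0 \<le> t" "t \<le> pi" "c = cos t" "- s = sin t"
      using sincos_total_pi[of "-s" c] assms by auto
    have "t \<noteq> pi" using t assms by auto
    then show ?thesis using t by (intro exI[of _ "-t"]) auto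
  qed
  have un: "a = b" if a: "- pi < a" "a < pi" "cos a = c" "sin a = s"
     and b: "- pi < b" "b < pi" "cos b = c" "sin b = s" for a b
  proof -
    obtain m :: int where m: "a = b + 2 * pi * m" using sin_cos_eq_iff[of a b] a b by auto
    have "\<bar>2 * pi * m\<bar> < 2 * pi" using a b m by auto
    then have "\<bar>real_of_int m\<bar> < 1" by (simp add: abs_mult)
    then have "m = 0" by linarith
    then show ?thesis using m by simp
  qed
  show ?thesis using ex un by blast
qed



lemma smooth_deriv: "smooth_fun g \<Longrightarrow> (g has_real_derivative deriv g x) (at x)"
  unfolding smooth_fun_def by (metis DERIV_imp_deriv)

locale surf =
  fixes D :: "'d set" and e nx :: "'d \<Rightarrow> 'd" and tv :: "'d \<Rightarrow> 'v" and fc :: "'d \<Rightarrow> 'f"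
    and f :: "'v \<Rightarrow> real^3" and n :: "'f \<Rightarrow> real^3" and h :: "'f \<Rightarrow> real"
  assumes map: "comb_map D e nx tv fc"
    and triv: "trivalent D e nx"
    and unit: "\<forall>d\<in>D. norm (n (fc d)) = 1"
    and planar: "\<forall>d\<in>D. f (tv d) \<bullet> n (fc d) = h (fc d)"
    and edge_nz: "\<forall>d\<in>D. edge_len e tv f d \<noteq> 0"
    and indep: "\<forall>d\<in>D. lin_indep3 (n (fc d)) (n (fc ((nx \<circ> e) d))) (n (fc (((nx \<circ> e) ^^ 2) d)))"
    and adj: "\<forall>d\<in>D. n (fc d) \<noteq> n (fc (e d)) \<and> n (fc d) \<noteq> - n (fc (e d))"
begin

lemma eD: "d \<in> D \<Longrightarrow> e d \<in> D" and ee: "d \<in> D \<Longrightarrow> e (e d) = d"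
  and nxD: "d \<in> D \<Longrightarrow> nx d \<in> D" and inj_nx: "inj_on nx D"
  and tv_nx: "d \<in> D \<Longrightarrow> tv (nx d) = tv (e d)"
  using map unfolding comb_map_def bij_betw_def by auto

lemma fc_cl: "d \<in> D \<Longrightarrow> d' \<in> D \<Longrightarrow> fc d = fc d' \<longleftrightarrow> (\<exists>k. (nx ^^ k) d = d')"
  using map unfolding comb_map_def by blast
lemma tv_cl: "d \<in> D \<Longrightarrow> d' \<in> D \<Longrightarrow> tv d = tv d' \<longleftrightarrow> (\<exists>k. ((nx \<circ> e) ^^ k) d = d')"
  using map unfolding comb_map_def by blast

lemma fc_nx: "d \<in> D \<Longrightarrow> fc (nx d) = fc d"
proof -
  assume d: "d \<in> D"
  have "(nx ^^ 1) d = nx d" by simp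
  then have "fc d = fc (nx d)" using fc_cl[of d "nx d"] nxD[OF d] d by blast
  then show ?thesis by simp
qed

lemma tv_rho: "d \<in> D \<Longrightarrow> tv (nx (e d)) = tv d"
  using tv_nx[of "e d"] eD ee by simp
lemma fc_rho: "d \<in> D \<Longrightarrow> fc (nx (e d)) = fc (e d)"
  using fc_nx eD by simp
lemma rhoD: "d \<in> D \<Longrightarrow> nx (e d) \<in> D"
  using nxD eD by simp

lemma nx_powD: "d \<in> D \<Longrightarrow> (nx ^^ k) d \<in> D"
  by (induction k) (auto simp: nxD)

lemma face_fin: "finite {d \<in> D. fc d = \<phi>}"
proof (cases "\<phi> \<in> fc ` D")
  case True
  then obtain d0 where d0: "d0 \<in> D" "fc d0 = \<phi>" by auto
  obtain p where p: "p > 0" "(nx ^^ p) d0 = d0" using map d0 unfolding comb_map_def by blast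
  have "{d \<in> D. fc d = \<phi>} \<subseteq> (\<lambda>k. (nx ^^ k) d0) ` {..<p}"
  proof
    fix d assume "d \<in> {d \<in> D. fc d = \<phi>}"
    then obtain k where "(nx ^^ k) d0 = d" using fc_cl[of d0 d] d0 by auto
    then have "(nx ^^ (k mod p)) d0 = d" using funpow_mod_eq[OF p(2)] by simp
    then show "d \<in> (\<lambda>k. (nx ^^ k) d0) ` {..<p}" using p(1) by auto
  qed
  then show ?thesis by (rule finite_subset) simp
next
  case False
  then have "{d \<in> D. fc d = \<phi>} = {}" by blast
  then show ?thesis by (simp only: finite.emptyI)
qed

lemma face_perm: "nx ` {d \<in> D. fc d = \<phi>} = {d \<in> D. fc d = \<phi>}"
  by (rule endo_inj_surj[OF face_fin]) (auto simp: nxD fc_nx intro: inj_on_subset[OF inj_nx])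

lemma vert_darts:
  assumes d: "d \<in> D" and d': "d' \<in> D" and t: "tv d' = tv d"
  shows "d' = d \<or> d' = nx (e d) \<or> d' = nx (e (nx (e d)))"
proof -
  obtain k where k: "((nx \<circ> e) ^^ k) d = d'" using tv_cl[OF d d'] t by auto
  have "((nx \<circ> e) ^^ 3) d = d" using triv d unfolding trivalent_def by blast
  from funpow_mod_eq[OF this] k have k': "((nx \<circ> e) ^^ (k mod 3)) d = d'" by simp
  have "k mod 3 = 0 \<or> k mod 3 = 1 \<or> k mod 3 = 2" by presburger
  then show ?thesis using k' by (auto simp: numeral_2_eq_2)
qed

abbreviation "N1 d \<equiv> n (fc d)"
abbreviation "N2 d \<equiv> n (fc (nx (e d)))"
abbreviation "N3 d \<equiv> n (fc (nx (e (nx (e d)))))"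

lemma unitD: "d \<in> D \<Longrightarrow> norm (n (fc d)) = 1" using unit by blast
lemma inner_self1: "d \<in> D \<Longrightarrow> n (fc d) \<bullet> n (fc d) = 1"
  using unitD by (metis power2_norm_eq_inner power_one)

lemma detv: "d \<in> D \<Longrightarrow> N1 d \<bullet> cross3 (N2 d) (N3 d) \<noteq> 0"
  apply (rule det_nz)
  using indep apply (simp add: numeral_2_eq_2)
  using unitD rhoD by blast

lemma vert_eq:
  assumes d: "d \<in> D"
  shows "(\<forall>d'\<in>D. tv d' = tv d \<longrightarrow> x \<bullet> n (fc d') = g (fc d')) \<longleftrightarrow>
     x = cr (N1 d) (N2 d) (N3 d) (g (fc d)) (g (fc (nx (e d)))) (g (fc (nx (e (nx (e d))))))"
proof
  assume a: "\<forall>d'\<in>D. tv d' = tv d \<longrightarrow> x \<bullet> n (fc d') = g (fc d')"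
  have r1: "nx (e d) \<in> D" "tv (nx (e d)) = tv d" using d rhoD tv_rho by auto
  have r2: "nx (e (nx (e d))) \<in> D" "tv (nx (e (nx (e d)))) = tv d" using r1 rhoD tv_rho by auto
  show "x = cr (N1 d) (N2 d) (N3 d) (g (fc d)) (g (fc (nx (e d)))) (g (fc (nx (e (nx (e d))))))"
    by (rule cr_unique[OF detv[OF d]]) (use a d r1 r2 in auto)
next
  assume x: "x = cr (N1 d) (N2 d) (N3 d) (g (fc d)) (g (fc (nx (e d)))) (g (fc (nx (e (nx (e d))))))"
  show "\<forall>d'\<in>D. tv d' = tv d \<longrightarrow> x \<bullet> n (fc d') = g (fc d')"
  proof (intro ballI impI)
    fix d' assume "d' \<in> D" "tv d' = tv d"
    then have "d' = d \<or> d' = nx (e d) \<or> d' = nx (e (nx (e d)))" using vert_darts d by blast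
    then show "x \<bullet> n (fc d') = g (fc d')" using cr_sol[OF detv[OF d]] x by auto
  qed
qed

lemma vert_of_eq:
  "d \<in> D \<Longrightarrow> vert_of D tv fc n g (tv d) =
     cr (N1 d) (N2 d) (N3 d) (g (fc d)) (g (fc (nx (e d)))) (g (fc (nx (e (nx (e d))))))"
  unfolding vert_of_def by (rule the_equality) (use vert_eq in auto)

lemma vert_sat: "d \<in> D \<Longrightarrow> d' \<in> D \<Longrightarrow> tv d' = tv d \<Longrightarrow>
    vert_of D tv fc n g (tv d) \<bullet> n (fc d') = g (fc d')"
  using vert_eq[of d "vert_of D tv fc n g (tv d)" g] vert_of_eq[of d g] by auto

lemma f_eq:
  assumes d: "d \<in> D" and g: "\<forall>\<phi>\<in>fc ` D. g \<phi> = h \<phi>"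
  shows "vert_of D tv fc n g (tv d) = f (tv d)"
proof -
  have r1: "nx (e d) \<in> D" "nx (e (nx (e d))) \<in> D" using d rhoD by auto
  have "f (tv d) = cr (N1 d) (N2 d) (N3 d) (h (fc d)) (h (fc (nx (e d)))) (h (fc (nx (e (nx (e d))))))"
    using vert_eq[OF d, of "f (tv d)" h] planar by auto
  moreover have "vert_of D tv fc n g (tv d) =
      cr (N1 d) (N2 d) (N3 d) (h (fc d)) (h (fc (nx (e d)))) (h (fc (nx (e (nx (e d))))))"
    using vert_of_eq[OF d, of g] g d r1 by auto
  ultimately show ?thesis by simp
qed

lemma vert_deriv:
  assumes d: "d \<in> D" and H: "\<forall>\<phi>\<in>fc ` D. ((\<lambda>t. H t \<phi>) has_real_derivative hv \<phi>) (at 0)"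
  shows "((\<lambda>t. vert_of D tv fc n (H t) (tv d)) has_vector_derivative vert_of D tv fc n hv (tv d)) (at 0)"
proof -
  have r1: "nx (e d) \<in> D" "nx (e (nx (e d))) \<in> D" using d rhoD by auto
  show ?thesis
    unfolding vert_of_eq[OF d]
    by (rule cr_deriv) (use H d r1 in auto)
qed

end


lemma vI5: fixes a b A B m :: "real^3"
  shows "(cross3 a B + cross3 A b) \<bullet> m = (A + B) \<bullet> cross3 (b - a) m - (B \<bullet> cross3 b m - A \<bullet> cross3 a m)"
  by (simp add: cross3_simps forall_3)

context surf begin

definition "xv d = f (tv (e d)) - f (tv d)"
definition "wv d = cross3 (n (fc d)) (n (fc (e d)))"
definition "cc d = n (fc d) \<bullet> n (fc (e d))"
definition "lam d = (wv d \<bullet> xv d) / (wv d \<bullet> wv d)"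
definition "kap d = (wv d \<bullet> xv d) / (1 + cc d)"

lemma xv_nl: "d \<in> D \<Longrightarrow> xv d \<bullet> n (fc d) = 0"
  using planar nxD[of d] tv_nx[of d] fc_nx[of d] unfolding xv_def
  by (metis inner_diff_left right_minus_eq)

lemma xv_nr: "d \<in> D \<Longrightarrow> xv d \<bullet> n (fc (e d)) = 0"
  using planar rhoD[of d] tv_rho[of d] fc_rho[of d] eD[of d] unfolding xv_def
  by (metis inner_diff_left right_minus_eq)

lemma cc_ne: assumes d: "d \<in> D" shows "1 + cc d \<noteq> 0" "1 - cc d \<noteq> 0"
proof -
  have u1: "n (fc d) \<bullet> n (fc d) = 1" "n (fc (e d)) \<bullet> n (fc (e d)) = 1"
    using inner_self1 d eD by auto
  have "(n (fc d) + n (fc (e d))) \<bullet> (n (fc d) + n (fc (e d))) = 2 + 2 * cc d"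
    using u1 unfolding cc_def by (simp add: inner_add_left inner_add_right inner_commute)
  moreover have "n (fc d) + n (fc (e d)) \<noteq> 0" using adj d
    by (metis add.inverse_unique add.commute)
  ultimately have "2 + 2 * cc d \<noteq> 0" by (metis inner_eq_zero_iff)
  then show "1 + cc d \<noteq> 0" by linarith
  have "(n (fc d) - n (fc (e d))) \<bullet> (n (fc d) - n (fc (e d))) = 2 - 2 * cc d"
    using u1 unfolding cc_def by (simp add: inner_diff_left inner_diff_right inner_commute)
  moreover have "n (fc d) - n (fc (e d)) \<noteq> 0" using adj d by auto
  ultimately have "2 - 2 * cc d \<noteq> 0" by (metis inner_eq_zero_iff)
  then show "1 - cc d \<noteq> 0" by linarith
qed

lemma wv_sq: "d \<in> D \<Longrightarrow> wv d \<bullet> wv d = 1 - (cc d)\<^sup>2"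
  using norm_cross_dot[of "n (fc d)" "n (fc (e d))"] unitD[of d] unitD[of "e d"] eD[of d]
  unfolding wv_def cc_def by (simp add: power2_norm_eq_inner)

lemma wv_nz: "d \<in> D \<Longrightarrow> wv d \<bullet> wv d \<noteq> 0"
proof -
  assume d: "d \<in> D"
  have "1 - (cc d)\<^sup>2 = (1 - cc d) * (1 + cc d)" by (simp add: power2_eq_square algebra_simps)
  then show ?thesis using wv_sq[OF d] cc_ne[OF d] by simp
qed

lemma x_par: assumes d: "d \<in> D" shows "xv d = lam d *\<^sub>R wv d"
proof -
  have "cross3 (xv d) (wv d) = 0"
    unfolding wv_def vI3 using xv_nl[OF d] xv_nr[OF d] by simp
  then have "(wv d \<bullet> wv d) *\<^sub>R xv d - (wv d \<bullet> xv d) *\<^sub>R wv d = 0"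
    using vI3[of "wv d" "xv d" "wv d"] by simp
  hence e1: "(wv d \<bullet> wv d) *\<^sub>R xv d = (wv d \<bullet> xv d) *\<^sub>R wv d" by simp
  have "xv d = inverse (wv d \<bullet> wv d) *\<^sub>R ((wv d \<bullet> wv d) *\<^sub>R xv d)" using wv_nz[OF d] by simp
  also have "\<dots> = inverse (wv d \<bullet> wv d) *\<^sub>R ((wv d \<bullet> xv d) *\<^sub>R wv d)" using e1 by simp
  finally show ?thesis unfolding lam_def by (simp add: divide_inverse mult.commute)
qed

lemma cross_x: assumes d: "d \<in> D"
  shows "cross3 (xv d) (n (fc d)) = lam d *\<^sub>R (n (fc (e d)) - cc d *\<^sub>R n (fc d))"
proof -
  have "cross3 (wv d) (n (fc d)) = - cross3 (n (fc d)) (wv d)" by (rule cross_skew)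
  also have "\<dots> = n (fc (e d)) - cc d *\<^sub>R n (fc d)"
    unfolding wv_def vI3 cc_def using inner_self1[OF d] by simp
  finally show ?thesis by (subst x_par[OF d]) (simp add: cross_mult_left)
qed

lemma lam_e: assumes d: "d \<in> D" shows "lam (e d) = lam d"
proof -
  have w: "wv (e d) = - wv d" unfolding wv_def using ee[OF d] cross_skew by metis
  have x: "xv (e d) = - xv d" unfolding xv_def using ee[OF d] by simp
  show ?thesis unfolding lam_def w x by simp
qed

lemma cc_e: "d \<in> D \<Longrightarrow> cc (e d) = cc d"
  unfolding cc_def using ee[of d] by (simp add: inner_commute)

lemma lam_kap: assumes d: "d \<in> D" shows "lam d * (1 - cc d) = kap d"
proof -
  have ww: "wv d \<bullet> wv d = (1 - cc d) * (1 + cc d)" using wv_sq[OF d] by (simp add: power2_eq_square algebra_simps)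
  have gen: "X / ((1 - c) * (1 + c)) * (1 - c) = X / (1 + c)" if "1 - c \<noteq> 0" "1 + c \<noteq> 0" for X c :: real
    using that by simp
  show ?thesis unfolding lam_def kap_def ww using gen cc_ne[OF d] by blast
qed

lemma dihedral_val: assumes d: "d \<in> D"
  shows "edge_len e tv f d * tan (dihedral e tv fc n f d / 2) = kap d"
proof -
  define l where "l = norm (xv d)"
  define s where "s = wv d \<bullet> (xv d /\<^sub>R l)"
  define c where "c = cc d"
  have l0: "l \<noteq> 0" using edge_nz d unfolding l_def edge_len_def xv_def by auto
  have wx: "wv d \<bullet> xv d = lam d * (wv d \<bullet> wv d)" using x_par[OF d] by (metis inner_scaleR_right)
  have ll: "l\<^sup>2 = (lam d)\<^sup>2 * (wv d \<bullet> wv d)" unfolding l_def power2_norm_eq_inner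
    by (subst x_par[OF d])+ (simp add: power2_eq_square)
  have lamnz: "lam d \<noteq> 0" using ll l0 by auto
  have s_eq: "s = (wv d \<bullet> xv d) / l" unfolding s_def by (simp add: divide_inverse mult.commute)
  have "s\<^sup>2 = (lam d)\<^sup>2 * (wv d \<bullet> wv d)\<^sup>2 / l\<^sup>2" unfolding s_eq wx by (simp add: power_divide power_mult_distrib)
  also have "\<dots> = wv d \<bullet> wv d" unfolding ll using lamnz wv_nz[OF d] by (simp add: power2_eq_square)
  finally have "c\<^sup>2 + s\<^sup>2 = 1" unfolding c_def using wv_sq[OF d] by simp
  moreover have "s \<noteq> 0" unfolding s_eq wx using lamnz wv_nz[OF d] l0 by simp
  ultimately have ex1: "\<exists>!a. - pi < a \<and> a < pi \<and> cos a = c \<and> sin a = s" by (rule angle_exists)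
  define a where "a = dihedral e tv fc n f d"
  have a_eq: "a = (THE a. - pi < a \<and> a < pi \<and> cos a = c \<and> sin a = s)"
    unfolding a_def dihedral_def s_def c_def cc_def wv_def xv_def l_def ..
  have "- pi < a \<and> a < pi \<and> cos a = c \<and> sin a = s" unfolding a_eq by (rule theI'[OF ex1])
  then have ca: "cos a = c" and sa: "sin a = s" by auto
  have "tan (a / 2) = s / (c + 1)" using tan_half[of "a/2"] ca sa by simp
  moreover have "edge_len e tv f d = l" unfolding l_def edge_len_def xv_def ..
  ultimately have "edge_len e tv f d * tan (dihedral e tv fc n f d / 2) = l * (s / (c + 1))"
    unfolding a_def by simp
  also have "\<dots> = kap d" unfolding kap_def s_eq c_def using l0 by (simp add: add.commute)
  finally show ?thesis .
qed

lemma mean_curv_eq: "mean_curv D e tv fc n f \<psi> = 1/2 * (\<Sum>d\<in>{d\<in>D. fc d = \<psi>}. kap d)"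
  unfolding mean_curv_def by (rule arg_cong[where f = "\<lambda>x. 1/2 * x"], rule sum.cong) (auto simp: dihedral_val)

lemma dart_contrib:
  assumes d: "d \<in> D"
  shows "1/2 * ((vert_of D tv fc n g (tv d) + vert_of D tv fc n g (tv (e d))) \<bullet> cross3 (xv d) (n (fc d)))
     = lam d * (g (fc (e d)) - cc d * g (fc d))"
proof -
  define A where "A = vert_of D tv fc n g (tv d)"
  define B where "B = vert_of D tv fc n g (tv (e d))"
  have a1: "A \<bullet> n (fc d) = g (fc d)" unfolding A_def using vert_sat d by blast
  have a2: "A \<bullet> n (fc (e d)) = g (fc (e d))" unfolding A_def
    using vert_sat[OF d rhoD[OF d] tv_rho[OF d]] fc_rho[OF d] by simp
  have b1: "B \<bullet> n (fc (e d)) = g (fc (e d))" unfolding B_def using vert_sat eD[OF d] by blast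
  have b2: "B \<bullet> n (fc d) = g (fc d)" unfolding B_def
    using vert_sat[OF eD[OF d] nxD[OF d] tv_nx[OF d]] fc_nx[OF d] by simp
  show ?thesis unfolding A_def[symmetric] B_def[symmetric] cross_x[OF d]
    using a1 a2 b1 b2 by (simp add: inner_add_left inner_diff_right algebra_simps)
qed

end


context surf begin

lemma face_deriv:
  assumes H0: "\<forall>\<phi>\<in>fc ` D. H 0 \<phi> = h \<phi>"
    and Hd: "\<forall>\<phi>\<in>fc ` D. ((\<lambda>t. H t \<phi>) has_real_derivative hv \<phi>) (at 0)"
  shows "((\<lambda>t. face_area D e tv fc n (vert_of D tv fc n (H t)) \<phi>) has_real_derivative
     (\<Sum>d\<in>{d\<in>D. fc d = \<phi>}. lam d * (hv (fc (e d)) - cc d * hv (fc d)))) (at 0)"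
proof -
  let ?F = "{d\<in>D. fc d = \<phi>}"
  let ?P = "\<lambda>t. vert_of D tv fc n (H t)"
  let ?V = "vert_of D tv fc n hv"
  have dd: "((\<lambda>t. cross3 (?P t (tv d)) (?P t (tv (e d))) \<bullet> n \<phi>) has_vector_derivative
      (cross3 (f (tv d)) (?V (tv (e d))) + cross3 (?V (tv d)) (f (tv (e d)))) \<bullet> n \<phi>) (at 0)"
    if d: "d \<in> ?F" for d
  proof -
    have dD: "d \<in> D" "e d \<in> D" using d eD by auto
    have "((\<lambda>t. cross3 (?P t (tv d)) (?P t (tv (e d)))) has_vector_derivative
        cross3 (?P 0 (tv d)) (?V (tv (e d))) + cross3 (?V (tv d)) (?P 0 (tv (e d)))) (at 0)"
      by (rule bounded_bilinear.has_vector_derivative[OF bb_cross]) (rule vert_deriv[OF _ Hd], fact)+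
    moreover have "?P 0 (tv d) = f (tv d)" "?P 0 (tv (e d)) = f (tv (e d))"
      using f_eq dD H0 by auto
    ultimately have "((\<lambda>t. cross3 (?P t (tv d)) (?P t (tv (e d)))) has_vector_derivative
        cross3 (f (tv d)) (?V (tv (e d))) + cross3 (?V (tv d)) (f (tv (e d)))) (at 0)" by simp
    then show ?thesis by (rule bounded_linear.has_vector_derivative[OF bounded_linear_inner_left])
  qed
  have sum: "((\<lambda>t. \<Sum>d\<in>?F. cross3 (?P t (tv d)) (?P t (tv (e d))) \<bullet> n \<phi>) has_real_derivative
      (\<Sum>d\<in>?F. (cross3 (f (tv d)) (?V (tv (e d))) + cross3 (?V (tv d)) (f (tv (e d)))) \<bullet> n \<phi>)) (at 0)"
    unfolding has_real_derivative_iff_has_vector_derivative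
    by (rule has_vector_derivative_sum) (rule dd)
  have val: "1/2 * (\<Sum>d\<in>?F. (cross3 (f (tv d)) (?V (tv (e d))) + cross3 (?V (tv d)) (f (tv (e d)))) \<bullet> n \<phi>)
      = (\<Sum>d\<in>?F. lam d * (hv (fc (e d)) - cc d * hv (fc d)))"
  proof -
    define K where "K i = ?V i \<bullet> cross3 (f i) (n \<phi>)" for i
    have "(\<Sum>d\<in>?F. K (tv (e d))) = (\<Sum>d\<in>?F. K (tv (nx d)))" by (rule sum.cong) (auto simp: tv_nx)
    also have "\<dots> = (\<Sum>d\<in>nx ` ?F. K (tv d))"
      by (subst sum.reindex) (auto intro: inj_on_subset[OF inj_nx])
    also have "\<dots> = (\<Sum>d\<in>?F. K (tv d))" using face_perm by simp
    finally have reidx: "(\<Sum>d\<in>?F. K (tv (e d))) = (\<Sum>d\<in>?F. K (tv d))" .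
    have pd: "(cross3 (f (tv d)) (?V (tv (e d))) + cross3 (?V (tv d)) (f (tv (e d)))) \<bullet> n \<phi>
        = (?V (tv d) + ?V (tv (e d))) \<bullet> cross3 (xv d) (n (fc d)) - (K (tv (e d)) - K (tv d))"
      if "d \<in> ?F" for d
      using that vI5[of "f (tv d)" "?V (tv (e d))" "?V (tv d)" "f (tv (e d))" "n \<phi>"]
      unfolding K_def xv_def by simp
    have "(\<Sum>d\<in>?F. (cross3 (f (tv d)) (?V (tv (e d))) + cross3 (?V (tv d)) (f (tv (e d)))) \<bullet> n \<phi>)
        = (\<Sum>d\<in>?F. (?V (tv d) + ?V (tv (e d))) \<bullet> cross3 (xv d) (n (fc d)) - (K (tv (e d)) - K (tv d)))"
      by (rule sum.cong) (auto simp: pd)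
    also have "\<dots> = (\<Sum>d\<in>?F. (?V (tv d) + ?V (tv (e d))) \<bullet> cross3 (xv d) (n (fc d)))"
      by (simp add: sum_subtractf reidx)
    finally have "1/2 * (\<Sum>d\<in>?F. (cross3 (f (tv d)) (?V (tv (e d))) + cross3 (?V (tv d)) (f (tv (e d)))) \<bullet> n \<phi>)
       = (\<Sum>d\<in>?F. 1/2 * ((?V (tv d) + ?V (tv (e d))) \<bullet> cross3 (xv d) (n (fc d))))"
      by (simp add: sum_distrib_left)
    also have "\<dots> = (\<Sum>d\<in>?F. lam d * (hv (fc (e d)) - cc d * hv (fc d)))"
      by (rule sum.cong) (use dart_contrib in blast)+
    finally show ?thesis .
  qed
  have "((\<lambda>t. 1/2 * (\<Sum>d\<in>?F. cross3 (?P t (tv d)) (?P t (tv (e d))) \<bullet> n \<phi>)) has_real_derivative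
      1/2 * (\<Sum>d\<in>?F. (cross3 (f (tv d)) (?V (tv (e d))) + cross3 (?V (tv d)) (f (tv (e d)))) \<bullet> n \<phi>)) (at 0)"
    by (rule DERIV_cmult[OF sum])
  then show ?thesis unfolding face_area_def val .
qed

end


context surf begin

lemma main_formula:
  assumes Hs: "\<forall>\<phi>\<in>fc ` D. H 0 \<phi> = h \<phi> \<and> smooth_fun (\<lambda>t. H t \<phi>)"
    and fin: "finite {\<phi>\<in>fc ` D. deriv (\<lambda>t. H t \<phi>) 0 \<noteq> 0}"
  shows "finite {\<phi>\<in>fc ` D. deriv (\<lambda>t. face_area D e tv fc n (vert_of D tv fc n (H t)) \<phi>) 0 \<noteq> 0} \<and>
    (\<Sum>\<phi>\<in>{\<phi>\<in>fc ` D. deriv (\<lambda>t. face_area D e tv fc n (vert_of D tv fc n (H t)) \<phi>) 0 \<noteq> 0}.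
        deriv (\<lambda>t. face_area D e tv fc n (vert_of D tv fc n (H t)) \<phi>) 0)
     = (\<Sum>\<psi>\<in>{\<phi>\<in>fc ` D. deriv (\<lambda>t. H t \<phi>) 0 \<noteq> 0}. deriv (\<lambda>t. H t \<psi>) 0 * (2 * mean_curv D e tv fc n f \<psi>))"
proof -
  define hv where "hv \<phi> = deriv (\<lambda>t. H t \<phi>) 0" for \<phi>
  define dA where "dA \<phi> = deriv (\<lambda>t. face_area D e tv fc n (vert_of D tv fc n (H t)) \<phi>) 0" for \<phi>
  define G where "G d = lam d * (hv (fc (e d)) - cc d * hv (fc d))" for d
  define Fa where "Fa \<phi> = {d\<in>D. fc d = \<phi>}" for \<phi>
  define Psi where "Psi = {\<phi>\<in>fc ` D. hv \<phi> \<noteq> 0}"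
  define EP where "EP = {d\<in>D. fc d \<in> Psi}"
  define N where "N = EP \<union> e ` EP"
  have Hd: "\<forall>\<phi>\<in>fc ` D. ((\<lambda>t. H t \<phi>) has_real_derivative hv \<phi>) (at 0)"
    using Hs smooth_deriv unfolding hv_def by blast
  have H0: "\<forall>\<phi>\<in>fc ` D. H 0 \<phi> = h \<phi>" using Hs by blast
  have dA_eq: "dA \<phi> = sum G (Fa \<phi>)" for \<phi>
    unfolding dA_def G_def Fa_def by (rule DERIV_imp_deriv, rule face_deriv[OF H0 Hd])
  have finPsi: "finite Psi" using fin unfolding Psi_def hv_def .
  have EP_eq: "EP = (\<Union>\<psi>\<in>Psi. Fa \<psi>)" unfolding EP_def Fa_def by auto
  have finEP: "finite EP" unfolding EP_eq using finPsi face_fin unfolding Fa_def by auto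
  have finN: "finite N" unfolding N_def using finEP by auto
  have EPD: "EP \<subseteq> D" unfolding EP_def by auto
  have ND: "N \<subseteq> D" unfolding N_def using EPD eD by auto
  have eN: "e ` N = N"
  proof
    show "e ` N \<subseteq> N" unfolding N_def using EPD ee by (auto simp: image_iff)
    show "N \<subseteq> e ` N"
    proof
      fix x assume "x \<in> N"
      then have "x \<in> D" "e (e x) = x" "e x \<in> N" using ND ee unfolding N_def by (auto simp: image_iff)
      then show "x \<in> e ` N" by (metis imageI)
    qed
  qed
  have injN: "inj_on e N" unfolding inj_on_def using ND ee by (metis subsetD)
  have Gz: "G d = 0" if d: "d \<in> D" "d \<notin> N" for d
  proof -
    have "d \<notin> EP" using d N_def by auto
    hence h1: "hv (fc d) = 0" using d unfolding EP_def Psi_def by auto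
    have "e d \<notin> EP"
    proof
      assume "e d \<in> EP"
      then have "e (e d) \<in> N" unfolding N_def by blast
      then show False using d ee by simp
    qed
    hence "hv (fc (e d)) = 0" using eD d unfolding EP_def Psi_def by auto
    then show ?thesis using h1 by (simp add: G_def)
  qed
  define Phi' where "Phi' = fc ` N"
  have finPhi': "finite Phi'" unfolding Phi'_def using finN by simp
  have dA0: "dA \<phi> = 0" if "\<phi> \<notin> Phi'" for \<phi>
    unfolding dA_eq
  proof (rule sum.neutral, rule ballI)
    fix d assume "d \<in> Fa \<phi>"
    then have "d \<in> D" "d \<notin> N" using that unfolding Fa_def Phi'_def by auto
    then show "G d = 0" by (rule Gz)
  qed
  have sub: "{\<phi>\<in>fc ` D. dA \<phi> \<noteq> 0} \<subseteq> Phi'" using dA0 by auto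
  have fin1: "finite {\<phi>\<in>fc ` D. dA \<phi> \<noteq> 0}" using finite_subset[OF sub finPhi'] .
  have P'sub: "Phi' \<subseteq> fc ` D" using ND unfolding Phi'_def by auto
  have s1: "(\<Sum>\<phi>\<in>{\<phi>\<in>fc ` D. dA \<phi> \<noteq> 0}. dA \<phi>) = (\<Sum>\<phi>\<in>Phi'. dA \<phi>)"
    by (rule sum.mono_neutral_left[OF finPhi' sub]) (use P'sub in auto)
  define N' where "N' = {d\<in>D. fc d \<in> Phi'}"
  have N'_eq: "N' = (\<Union>\<phi>\<in>Phi'. Fa \<phi>)" unfolding N'_def Fa_def by auto
  have finN': "finite N'" unfolding N'_eq using finPhi' face_fin unfolding Fa_def by auto
  have "(\<Sum>\<phi>\<in>Phi'. dA \<phi>) = (\<Sum>\<phi>\<in>Phi'. sum G {x\<in>N'. fc x = \<phi>})"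
  proof (rule sum.cong[OF refl])
    fix x assume "x \<in> Phi'"
    then have "{x'\<in>N'. fc x' = x} = Fa x" unfolding Fa_def N'_def by blast
    then show "dA x = sum G {x'\<in>N'. fc x' = x}" unfolding dA_eq by simp
  qed
  also have "\<dots> = sum G N'"
    by (rule sum.group[OF finN' finPhi']) (auto simp: N'_def)
  also have "\<dots> = sum G N"
    by (rule sum.mono_neutral_right[OF finN']) (use ND Gz in \<open>auto simp: N'_def Phi'_def\<close>)
  finally have s2: "(\<Sum>\<phi>\<in>Phi'. dA \<phi>) = sum G N" .
  have r: "(\<Sum>d\<in>N. lam d * hv (fc (e d))) = (\<Sum>d\<in>N. lam d * hv (fc d))"
  proof -
    have "(\<Sum>d\<in>N. lam d * hv (fc d)) = (\<Sum>d\<in>e ` N. lam d * hv (fc d))" using eN by simp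
    also have "\<dots> = (\<Sum>d\<in>N. lam (e d) * hv (fc (e d)))" by (simp add: sum.reindex[OF injN])
    also have "\<dots> = (\<Sum>d\<in>N. lam d * hv (fc (e d)))"
      by (rule sum.cong) (use ND lam_e in auto)
    finally show ?thesis by simp
  qed
  have "sum G N = (\<Sum>d\<in>N. lam d * hv (fc (e d))) - (\<Sum>d\<in>N. lam d * cc d * hv (fc d))"
    unfolding G_def by (simp add: sum_subtractf algebra_simps)
  also have "\<dots> = (\<Sum>d\<in>N. lam d * (1 - cc d) * hv (fc d))"
    unfolding r by (simp add: sum_subtractf algebra_simps)
  also have "\<dots> = (\<Sum>d\<in>N. kap d * hv (fc d))"
    by (rule sum.cong) (use ND lam_kap in auto)
  also have "\<dots> = (\<Sum>d\<in>EP. kap d * hv (fc d))"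
    by (rule sum.mono_neutral_right[OF finN]) (use ND in \<open>auto simp: N_def EP_def Psi_def\<close>)
  also have "\<dots> = (\<Sum>\<psi>\<in>Psi. sum (\<lambda>d. kap d * hv (fc d)) {x\<in>EP. fc x = \<psi>})"
    by (rule sum.group[OF finEP finPsi, symmetric]) (auto simp: EP_def)
  also have "\<dots> = (\<Sum>\<psi>\<in>Psi. hv \<psi> * (2 * mean_curv D e tv fc n f \<psi>))"
  proof (rule sum.cong[OF refl])
    fix \<psi> assume "\<psi> \<in> Psi"
    then have "{x\<in>EP. fc x = \<psi>} = {d\<in>D. fc d = \<psi>}" unfolding EP_def by auto
    then show "sum (\<lambda>d. kap d * hv (fc d)) {x\<in>EP. fc x = \<psi>} = hv \<psi> * (2 * mean_curv D e tv fc n f \<psi>)"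
      unfolding mean_curv_eq by (simp add: sum_distrib_left mult.commute)
  qed
  finally have "(\<Sum>\<phi>\<in>{\<phi>\<in>fc ` D. dA \<phi> \<noteq> 0}. dA \<phi>) = (\<Sum>\<psi>\<in>Psi. hv \<psi> * (2 * mean_curv D e tv fc n f \<psi>))"
    using s1 s2 by simp
  then show ?thesis using fin1 unfolding dA_def hv_def Psi_def by simp
qed

end

theorem mainTheorem3:
  fixes D :: "'d set" and e nx :: "'d \<Rightarrow> 'd" and tv :: "'d \<Rightarrow> 'v" and fc :: "'d \<Rightarrow> 'f"
    and f :: "'v \<Rightarrow> real^3" and n :: "'f \<Rightarrow> real^3" and h :: "'f \<Rightarrow> real"
  assumes map: "comb_map D e nx tv fc"
    and triv: "trivalent D e nx"
    and unit: "\<forall>d\<in>D. norm (n (fc d)) = 1"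
    and planar: "\<forall>d\<in>D. f (tv d) \<bullet> n (fc d) = h (fc d)"
    and edge_nz: "\<forall>d\<in>D. edge_len e tv f d \<noteq> 0"
    and indep: "\<forall>d\<in>D. lin_indep3 (n (fc d)) (n (fc ((nx \<circ> e) d))) (n (fc (((nx \<circ> e) ^^ 2) d)))"
    and adj: "\<forall>d\<in>D. n (fc d) \<noteq> n (fc (e d)) \<and> n (fc d) \<noteq> - n (fc (e d))"
  shows "(\<forall>\<phi>\<in>fc ` D. mean_curv D e tv fc n f \<phi> = 0) \<longleftrightarrow>
    (\<forall>H :: real \<Rightarrow> 'f \<Rightarrow> real.
       (\<forall>\<phi>\<in>fc ` D. H 0 \<phi> = h \<phi> \<and> smooth_fun (\<lambda>t. H t \<phi>)) \<and>
       finite {\<phi>\<in>fc ` D. deriv (\<lambda>t. H t \<phi>) 0 \<noteq> 0} \<longrightarrow>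
       (let dA = (\<lambda>\<phi>. deriv (\<lambda>t. face_area D e tv fc n (vert_of D tv fc n (H t)) \<phi>) 0)
        in finite {\<phi>\<in>fc ` D. dA \<phi> \<noteq> 0} \<and> (\<Sum>\<phi>\<in>{\<phi>\<in>fc ` D. dA \<phi> \<noteq> 0}. dA \<phi>) = 0))"
proof -
  interpret S: surf D e nx tv fc f n h
    by (rule surf.intro[OF map triv unit planar edge_nz indep adj])
  show ?thesis
  proof
    assume mc: "\<forall>\<phi>\<in>fc ` D. mean_curv D e tv fc n f \<phi> = 0"
    show "\<forall>H :: real \<Rightarrow> 'f \<Rightarrow> real.
       (\<forall>\<phi>\<in>fc ` D. H 0 \<phi> = h \<phi> \<and> smooth_fun (\<lambda>t. H t \<phi>)) \<and>
       finite {\<phi>\<in>fc ` D. deriv (\<lambda>t. H t \<phi>) 0 \<noteq> 0} \<longrightarrow>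
       (let dA = (\<lambda>\<phi>. deriv (\<lambda>t. face_area D e tv fc n (vert_of D tv fc n (H t)) \<phi>) 0)
        in finite {\<phi>\<in>fc ` D. dA \<phi> \<noteq> 0} \<and> (\<Sum>\<phi>\<in>{\<phi>\<in>fc ` D. dA \<phi> \<noteq> 0}. dA \<phi>) = 0)"
    proof (intro allI impI)
      fix H :: "real \<Rightarrow> 'f \<Rightarrow> real"
      assume a: "(\<forall>\<phi>\<in>fc ` D. H 0 \<phi> = h \<phi> \<and> smooth_fun (\<lambda>t. H t \<phi>)) \<and>
       finite {\<phi>\<in>fc ` D. deriv (\<lambda>t. H t \<phi>) 0 \<noteq> 0}"
      have z: "(\<Sum>\<psi>\<in>{\<phi>\<in>fc ` D. deriv (\<lambda>t. H t \<phi>) 0 \<noteq> 0}. deriv (\<lambda>t. H t \<psi>) 0 * (2 * mean_curv D e tv fc n f \<psi>)) = 0"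
        by (rule sum.neutral) (use mc in auto)
      show "let dA = (\<lambda>\<phi>. deriv (\<lambda>t. face_area D e tv fc n (vert_of D tv fc n (H t)) \<phi>) 0)
        in finite {\<phi>\<in>fc ` D. dA \<phi> \<noteq> 0} \<and> (\<Sum>\<phi>\<in>{\<phi>\<in>fc ` D. dA \<phi> \<noteq> 0}. dA \<phi>) = 0"
        using S.main_formula[of H] a z unfolding Let_def by simp
    qed
  next
    assume crit: "\<forall>H :: real \<Rightarrow> 'f \<Rightarrow> real.
       (\<forall>\<phi>\<in>fc ` D. H 0 \<phi> = h \<phi> \<and> smooth_fun (\<lambda>t. H t \<phi>)) \<and>
       finite {\<phi>\<in>fc ` D. deriv (\<lambda>t. H t \<phi>) 0 \<noteq> 0} \<longrightarrow>
       (let dA = (\<lambda>\<phi>. deriv (\<lambda>t. face_area D e tv fc n (vert_of D tv fc n (H t)) \<phi>) 0)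
        in finite {\<phi>\<in>fc ` D. dA \<phi> \<noteq> 0} \<and> (\<Sum>\<phi>\<in>{\<phi>\<in>fc ` D. dA \<phi> \<noteq> 0}. dA \<phi>) = 0)"
    show "\<forall>\<phi>\<in>fc ` D. mean_curv D e tv fc n f \<phi> = 0"
    proof
      fix \<psi>0 assume p0: "\<psi>0 \<in> fc ` D"
      define H where "H t \<phi> = h \<phi> + (if \<phi> = \<psi>0 then t else 0)" for t :: real and \<phi>
      have dH: "((\<lambda>t. H t \<phi>) has_real_derivative (if \<phi> = \<psi>0 then 1 else 0)) (at x)" for \<phi> x
        unfolding H_def by (cases "\<phi> = \<psi>0") (auto intro!: derivative_eq_intros)
      have sm: "smooth_fun (\<lambda>t. H t \<phi>)" for \<phi>
        unfolding smooth_fun_def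
      proof (intro exI[of _ "\<lambda>k. if k = 0 then (\<lambda>t. H t \<phi>) else if k = 1 then (\<lambda>t. if \<phi> = \<psi>0 then 1 else 0) else (\<lambda>t. 0)"] conjI allI)
        fix k t
        show "((if k = 0 then (\<lambda>t. H t \<phi>) else if k = 1 then (\<lambda>t. if \<phi> = \<psi>0 then 1 else 0) else (\<lambda>t. 0)) has_real_derivative
          (if Suc k = 0 then (\<lambda>t. H t \<phi>) else if Suc k = 1 then (\<lambda>t. if \<phi> = \<psi>0 then 1 else 0) else (\<lambda>t. 0)) t) (at t)"
          using dH by (cases "k = 0") auto
      qed simp
      have hv: "deriv (\<lambda>t. H t \<phi>) 0 = (if \<phi> = \<psi>0 then 1 else 0)" for \<phi>
        using dH by (rule DERIV_imp_deriv)
      have supp: "{\<phi>\<in>fc ` D. deriv (\<lambda>t. H t \<phi>) 0 \<noteq> 0} = {\<psi>0}" using p0 hv by auto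
      have H0: "\<forall>\<phi>\<in>fc ` D. H 0 \<phi> = h \<phi> \<and> smooth_fun (\<lambda>t. H t \<phi>)" using sm by (simp add: H_def)
      have c: "(\<Sum>\<phi>\<in>{\<phi>\<in>fc ` D. deriv (\<lambda>t. face_area D e tv fc n (vert_of D tv fc n (H t)) \<phi>) 0 \<noteq> 0}.
              deriv (\<lambda>t. face_area D e tv fc n (vert_of D tv fc n (H t)) \<phi>) 0) = 0"
        using crit[rule_format, of H] H0 supp unfolding Let_def by simp
      have "(\<Sum>\<phi>\<in>{\<phi>\<in>fc ` D. deriv (\<lambda>t. face_area D e tv fc n (vert_of D tv fc n (H t)) \<phi>) 0 \<noteq> 0}.
              deriv (\<lambda>t. face_area D e tv fc n (vert_of D tv fc n (H t)) \<phi>) 0) = 2 * mean_curv D e tv fc n f \<psi>0"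
        using S.main_formula[of H] H0 supp hv by simp
      then show "mean_curv D e tv fc n f \<psi>0 = 0" using c by simp
    qed
  qed
qed


end
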